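(* Let $(X,\mathcal{A})$ be a measurable space, $f,g\in\mathcal{F}_{[0,1]}^{(X,\mathcal{A})}$ comonotone, and $\star:[0,1]^2\to[0,1]$ continuous and non-decreasing in both arguments. Let $\circledast$ be a semicopula and $\alpha,\beta,\gamma,\lambda,\upsilon,\tau\in(0,\infty)$ with $\gamma\tau\ge1$ and $\beta\upsilon\ge1$. If for all $a,b,c\in[0,1]$ \[ \big[(a\star b)^{\alpha}\circledast c\big]^{\lambda}\ \ge\ \big[(a^{\beta}\circledast c)^{\upsilon}\star b\big]\vee\big[a\star(b^{\gamma}\circledast c)^{\tau}\big], \] then for every monotone measure $m$ on $(X,\mathcal{A})$ with $m(X)=1$, \[ \big[\mathbf{I}_\circledast(m,(f\star g)^{\alpha})\big]^{\lambda}\ \ge\ \big[\mathbf{I}_\circledast(m,f^{\beta})\big]^{\upsilon}\star\big[\mathbf{I}_\circledast(m,g^{\gamma})\big]^{\tau}. \]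
   Context: A monotone measure on $(X,\mathcal{A})$ is $m:\mathcal{A}\to[0,\infty]$ with $m(\emptyset)=0$, $m(X)>0$, $m(A)\le m(B)$ for $A\subseteq B$. $\mathcal{F}_{[0,1]}^{(X,\mathcal{A})}$ is the set of $\mathcal{A}$-measurable $f:X\to[0,1]$. A semicopula is a map $\circledast:[0,1]^2\to[0,1]$, non-decreasing in both components, with neutral element $1$ and $a\circledast b\le\min(a,b)$. The seminormed integral is $\mathbf{I}_\circledast(m,f)=\sup\{t\circledast m(\{f\ge t\}) : t\in[0,1]\}$. $f,g$ are comonotone if $(f(x)-f(y))(g(x)-g(y))\ge0$ for all $x,y$. Operations on functions are pointwise. *)

theory Defs
  imports "HOL-Analysis.Analysis"
begin

definition monotone_measure :: "'a measure \<Rightarrow> ('a set \<Rightarrow> ennreal) \<Rightarrow> bool" where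
  "monotone_measure M m \<longleftrightarrow>
     m {} = 0 \<and> m (space M) > 0 \<and>
     (\<forall>A\<in>sets M. \<forall>B\<in>sets M. A \<subseteq> B \<longrightarrow> m A \<le> m B)"

definition F01 :: "'a measure \<Rightarrow> ('a \<Rightarrow> real) set" where
  "F01 M = {f. f \<in> borel_measurable M \<and> (\<forall>x\<in>space M. 0 \<le> f x \<and> f x \<le> 1)}"

definition semicopula :: "(real \<Rightarrow> real \<Rightarrow> real) \<Rightarrow> bool" where
  "semicopula S \<longleftrightarrow>
     (\<forall>a\<in>{0..1}. \<forall>b\<in>{0..1}. S a b \<in> {0..1}) \<and>
     (\<forall>a\<in>{0..1}. \<forall>a'\<in>{0..1}. \<forall>b\<in>{0..1}. \<forall>b'\<in>{0..1}.
        a \<le> a' \<longrightarrow> b \<le> b' \<longrightarrow> S a b \<le> S a' b') \<and>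
     (\<forall>a\<in>{0..1}. S a 1 = a \<and> S 1 a = a) \<and>
     (\<forall>a\<in>{0..1}. \<forall>b\<in>{0..1}. S a b \<le> min a b)"

text \<open>Seminormed integral; the measure value is converted to a real number
  (all values are finite in the situation considered, where m(X) = 1).\<close>
definition seminormed_integral ::
  "(real \<Rightarrow> real \<Rightarrow> real) \<Rightarrow> 'a measure \<Rightarrow> ('a set \<Rightarrow> ennreal) \<Rightarrow> ('a \<Rightarrow> real) \<Rightarrow> real" where
  "seminormed_integral S M m f =
     (SUP t\<in>{0..1}. S t (enn2real (m {x\<in>space M. f x \<ge> t})))"

definition comonotone :: "'a measure \<Rightarrow> ('a \<Rightarrow> real) \<Rightarrow> ('a \<Rightarrow> real) \<Rightarrow> bool" where
  "comonotone M f g \<longleftrightarrow>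
     (\<forall>x\<in>space M. \<forall>y\<in>space M. (f x - f y) * (g x - g y) \<ge> 0)"

end

theory Submission
  imports Defs
begin

lemma pw01: "0 \<le> (x::real) \<Longrightarrow> x \<le> 1 \<Longrightarrow> 0 < e \<Longrightarrow> 0 \<le> x powr e \<and> x powr e \<le> 1"
  by (simp add: powr_le1)

lemma pw_le_self: "0 \<le> (x::real) \<Longrightarrow> x \<le> 1 \<Longrightarrow> 1 \<le> e \<Longrightarrow> x powr e \<le> x"
  using powr_mono'[of 1 e x] by (cases "x = 0") auto

lemma pw_inv: "0 \<le> (s::real) \<Longrightarrow> 0 < b \<Longrightarrow> 0 \<le> y \<Longrightarrow> (s \<le> y powr b) \<longleftrightarrow> (s powr (1/b) \<le> y)"
proof
  assume "0 \<le> s" "0 < b" "0 \<le> y" "s \<le> y powr b"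
  then have "s powr (1/b) \<le> (y powr b) powr (1/b)" by (simp add: powr_mono2)
  then show "s powr (1/b) \<le> y" using \<open>0 < b\<close> \<open>0 \<le> y\<close> by (simp add: powr_powr)
next
  assume "0 \<le> s" "0 < b" "0 \<le> y" "s powr (1/b) \<le> y"
  then have "(s powr (1/b)) powr b \<le> y powr b" by (simp add: powr_mono2)
  then show "s \<le> y powr b" using \<open>0 < b\<close> \<open>0 \<le> s\<close> by (simp add: powr_powr powr_one)
qed

lemma cont_sup:
  fixes H :: "real \<times> real \<Rightarrow> real" and \<phi> \<psi> :: "real \<Rightarrow> real"
  assumes cH: "continuous_on ({0..1}\<times>{0..1}) H"
    and p: "\<forall>s\<in>{0..1}. \<phi> s \<in> {0..1}" and q: "\<forall>t\<in>{0..1}. \<psi> t \<in> {0..1}"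
    and le: "\<forall>s\<in>{0..1}. \<forall>t\<in>{0..1}. H (\<phi> s, \<psi> t) \<le> L"
  shows "H (SUP s\<in>{0..1}. \<phi> s, SUP t\<in>{0..1}. \<psi> t) \<le> L"
proof (rule ccontr)
  define A where "A = (SUP s\<in>{0..1::real}. \<phi> s)"
  define B where "B = (SUP t\<in>{0..1::real}. \<psi> t)"
  have bp: "bdd_above (\<phi> ` {0..1})" using p by (auto intro!: bdd_aboveI[of _ 1])
  have bq: "bdd_above (\<psi> ` {0..1})" using q by (auto intro!: bdd_aboveI[of _ 1])
  have A01: "A \<in> {0..1}" unfolding A_def using p bp
    by (auto intro!: cSUP_least order.trans[OF _ cSUP_upper[of 0]])
  have B01: "B \<in> {0..1}" unfolding B_def using q bq
    by (auto intro!: cSUP_least order.trans[OF _ cSUP_upper[of 0]])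
  assume "\<not> H (SUP s\<in>{0..1}. \<phi> s, SUP t\<in>{0..1}. \<psi> t) \<le> L"
  then have e: "H (A, B) - L > 0" unfolding A_def B_def by simp
  from cH A01 B01 e obtain d where d: "d > 0"
    and dd: "\<And>x'. x' \<in> {0..1}\<times>{0..1} \<Longrightarrow> dist x' (A,B) < d \<Longrightarrow> dist (H x') (H (A,B)) < H (A, B) - L"
    unfolding continuous_on_iff by (metis mem_Sigma_iff)
  have "A - d/2 < A" using d by simp
  then obtain s where s: "s \<in> {0..1}" "A - d/2 < \<phi> s"
    unfolding A_def using less_cSUP_iff[OF _ bp] by auto
  have "B - d/2 < B" using d by simp
  then obtain t where t: "t \<in> {0..1}" "B - d/2 < \<psi> t"
    unfolding B_def using less_cSUP_iff[OF _ bq] by auto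
  have sA: "\<phi> s \<le> A" unfolding A_def using s bp by (auto intro: cSUP_upper)
  have tB: "\<psi> t \<le> B" unfolding B_def using t bq by (auto intro: cSUP_upper)
  have "(\<phi> s - A)\<^sup>2 + (\<psi> t - B)\<^sup>2 < d\<^sup>2"
  proof -
    have "\<bar>\<phi> s - A\<bar> < d/2" using s sA d by auto
    then have "\<bar>\<phi> s - A\<bar>\<^sup>2 < (d/2)\<^sup>2" by (intro power_strict_mono) auto
    then have "(\<phi> s - A)\<^sup>2 < (d/2)\<^sup>2" by simp
    moreover have "\<bar>\<psi> t - B\<bar> < d/2" using t tB d by auto
    then have "\<bar>\<psi> t - B\<bar>\<^sup>2 < (d/2)\<^sup>2" by (intro power_strict_mono) auto
    then have "(\<psi> t - B)\<^sup>2 < (d/2)\<^sup>2" by simp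
    moreover have "d\<^sup>2 > 0" using d by simp
    ultimately show ?thesis unfolding power_divide by (simp only: power2_eq_square[of 2])
  qed
  then have "dist (\<phi> s, \<psi> t) (A, B) < d"
    using d by (simp add: dist_Pair_Pair dist_real_def real_less_lsqrt)
  then have "dist (H (\<phi> s, \<psi> t)) (H (A,B)) < H (A, B) - L"
    using dd p q s t by auto
  moreover have "H (\<phi> s, \<psi> t) \<le> L" using le s t by auto
  ultimately show False by (simp add: dist_real_def)
qed

theorem corollary3p13:
  fixes M :: "'a measure" and f g :: "'a \<Rightarrow> real"
    and star S :: "real \<Rightarrow> real \<Rightarrow> real"
    and \<alpha> \<beta> \<gamma> lam \<upsilon> \<tau> :: real
  assumes fg: "f \<in> F01 M" "g \<in> F01 M" "comonotone M f g"
    and star_range: "\<forall>a\<in>{0..1}. \<forall>b\<in>{0..1}. star a b \<in> {0..1}"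
    and star_cont: "continuous_on ({0..1} \<times> {0..1}) (\<lambda>(a, b). star a b)"
    and star_mono: "\<forall>a\<in>{0..1}. \<forall>a'\<in>{0..1}. \<forall>b\<in>{0..1}. \<forall>b'\<in>{0..1}.
                      a \<le> a' \<longrightarrow> b \<le> b' \<longrightarrow> star a b \<le> star a' b'"
    and S: "semicopula S"
    and pos: "\<alpha> > 0" "\<beta> > 0" "\<gamma> > 0" "lam > 0" "\<upsilon> > 0" "\<tau> > 0"
    and gt: "\<gamma> * \<tau> \<ge> 1" and bu: "\<beta> * \<upsilon> \<ge> 1"
    and cond: "\<forall>a\<in>{0..1}. \<forall>b\<in>{0..1}. \<forall>c\<in>{0..1}.
       (S ((star a b) powr \<alpha>) c) powr lam \<ge>
       max (star ((S (a powr \<beta>) c) powr \<upsilon>) b) (star a ((S (b powr \<gamma>) c) powr \<tau>))"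
  shows "\<forall>m. monotone_measure M m \<and> m (space M) = 1 \<longrightarrow>
     (seminormed_integral S M m (\<lambda>x. (star (f x) (g x)) powr \<alpha>)) powr lam \<ge>
     star ((seminormed_integral S M m (\<lambda>x. f x powr \<beta>)) powr \<upsilon>)
          ((seminormed_integral S M m (\<lambda>x. g x powr \<gamma>)) powr \<tau>)"
  proof (intro allI impI)
  fix m assume mm: "monotone_measure M m \<and> m (space M) = 1"
  have fm: "f \<in> borel_measurable M" and f01: "\<forall>x\<in>space M. 0 \<le> f x \<and> f x \<le> 1"
    using fg(1) unfolding F01_def by auto
  have gm: "g \<in> borel_measurable M" and g01: "\<forall>x\<in>space M. 0 \<le> g x \<and> g x \<le> 1"
    using fg(2) unfolding F01_def by auto
  have mono_m: "\<And>A B. A \<in> sets M \<Longrightarrow> B \<in> sets M \<Longrightarrow> A \<subseteq> B \<Longrightarrow> m A \<le> m B"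
    using mm unfolding monotone_measure_def by blast
  have mX: "m (space M) = 1" using mm by blast
  have lev: "\<And>(h::'a\<Rightarrow>real) t. h \<in> borel_measurable M \<Longrightarrow> {x\<in>space M. t \<le> h x} \<in> sets M"
  proof -
    fix h :: "'a \<Rightarrow> real" and t :: real assume "h \<in> borel_measurable M"
    then have "(\<lambda>x. t \<le> h x) \<in> measurable M (count_space UNIV)" by measurable
    then show "{x\<in>space M. t \<le> h x} \<in> sets M" by (simp add: pred_def)
  qed
  have mu01: "\<And>E. E \<in> sets M \<Longrightarrow> 0 \<le> enn2real (m E) \<and> enn2real (m E) \<le> 1"
  proof -
    fix E assume E: "E \<in> sets M"
    have "m E \<le> 1" using mono_m[OF E sets.top] E mX sets.sets_into_space by auto
    then show "0 \<le> enn2real (m E) \<and> enn2real (m E) \<le> 1"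
      using enn2real_mono[of "m E" 1] by simp
  qed
  have Srange: "\<forall>a\<in>{0..1}. \<forall>b\<in>{0..1}. S a b \<in> {0..1}"
    and Smono: "\<forall>a\<in>{0..1}. \<forall>a'\<in>{0..1}. \<forall>b\<in>{0..1}. \<forall>b'\<in>{0..1}.
        a \<le> a' \<longrightarrow> b \<le> b' \<longrightarrow> S a b \<le> S a' b'"
    and Smin: "\<forall>a\<in>{0..1}. \<forall>b\<in>{0..1}. S a b \<le> min a b"
    using S unfolding semicopula_def by blast+
  define cl :: "real \<Rightarrow> real" where "cl x = max 0 (min 1 x)" for x
  define G where "G p = star (cl (fst p)) (cl (snd p))" for p :: "real \<times> real"
  have "continuous_on UNIV G"
  proof -
    have "continuous_on UNIV (\<lambda>p::real\<times>real. (cl (fst p), cl (snd p)))"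
      unfolding cl_def by (intro continuous_intros)
    moreover have "(\<lambda>p::real\<times>real. (cl (fst p), cl (snd p))) ` UNIV \<subseteq> {0..1} \<times> {0..1}"
      unfolding cl_def by auto
    ultimately have "continuous_on UNIV (\<lambda>p::real\<times>real. (\<lambda>(a, b). star a b) (cl (fst p), cl (snd p)))"
      by (rule continuous_on_compose2[OF star_cont])
    then show ?thesis unfolding G_def by simp
  qed
  then have "(\<lambda>x. G (f x, g x)) \<in> borel_measurable M"
    by (rule borel_measurable_continuous_on) (use fm gm in measurable)
  moreover have "\<And>x. x \<in> space M \<Longrightarrow> G (f x, g x) = star (f x) (g x)"
    using f01 g01 unfolding G_def cl_def by auto
  ultimately have sm: "(\<lambda>x. star (f x) (g x)) \<in> borel_measurable M"
    by (simp cong: measurable_cong)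
  have hm: "(\<lambda>x. star (f x) (g x) powr \<alpha>) \<in> borel_measurable M"
    using sm by measurable
  have fbm: "(\<lambda>x. f x powr \<beta>) \<in> borel_measurable M" using fm by measurable
  have gbm: "(\<lambda>x. g x powr \<gamma>) \<in> borel_measurable M" using gm by measurable
  define L where "L = seminormed_integral S M m (\<lambda>x. star (f x) (g x) powr \<alpha>) powr lam"
  have Ige: "\<And>r. r \<in> {0..1} \<Longrightarrow> S r (enn2real (m {x\<in>space M. r \<le> star (f x) (g x) powr \<alpha>}))
      \<le> seminormed_integral S M m (\<lambda>x. star (f x) (g x) powr \<alpha>)"
    unfolding seminormed_integral_def
  proof (rule cSUP_upper)
    show "bdd_above ((\<lambda>t. S t (enn2real (m {x \<in> space M. t \<le> star (f x) (g x) powr \<alpha>}))) ` {0..1})"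
      using Srange mu01[OF lev[OF hm]] by (auto intro!: bdd_aboveI[of _ 1])
  qed auto
  have P: "\<forall>s\<in>{0..1}. \<forall>t\<in>{0..1}.
      star ((S s (enn2real (m {x\<in>space M. s \<le> f x powr \<beta>}))) powr \<upsilon>)
           ((S t (enn2real (m {x\<in>space M. t \<le> g x powr \<gamma>}))) powr \<tau>) \<le> L"
  proof (intro ballI)
    fix s t :: real assume s: "s \<in> {0..1}" and t: "t \<in> {0..1}"
    define a where "a = s powr (1/\<beta>)"
    define b where "b = t powr (1/\<gamma>)"
    have a01: "0 \<le> a \<and> a \<le> 1" unfolding a_def using s pos pw01[of s "1/\<beta>"] by auto
    have b01: "0 \<le> b \<and> b \<le> 1" unfolding b_def using t pos pw01[of t "1/\<gamma>"] by auto
    have as: "a powr \<beta> = s" unfolding a_def using s pos by (simp add: powr_powr powr_one)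
    have bt: "b powr \<gamma> = t" unfolding b_def using t pos by (simp add: powr_powr powr_one)
    define E1 where "E1 = {x\<in>space M. s \<le> f x powr \<beta>}"
    define E2 where "E2 = {x\<in>space M. t \<le> g x powr \<gamma>}"
    have E1': "E1 = {x\<in>space M. a \<le> f x}"
      unfolding E1_def a_def using pw_inv[of s \<beta>] s pos f01 by auto
    have E2': "E2 = {x\<in>space M. b \<le> g x}"
      unfolding E2_def b_def using pw_inv[of t \<gamma>] t pos g01 by auto
    have E1s: "E1 \<in> sets M" unfolding E1_def by (rule lev[OF fbm])
    have E2s: "E2 \<in> sets M" unfolding E2_def by (rule lev[OF gbm])
    have nest: "E1 \<subseteq> E2 \<or> E2 \<subseteq> E1"
    proof (rule ccontr)
      assume "\<not> (E1 \<subseteq> E2 \<or> E2 \<subseteq> E1)"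
      then obtain x y where x: "x \<in> space M" "a \<le> f x" "\<not> b \<le> g x"
        and y: "y \<in> space M" "b \<le> g y" "\<not> a \<le> f y"
        unfolding E1' E2' by auto
      have "(f x - f y) * (g x - g y) < 0" using x y by (intro mult_pos_neg) auto
      moreover have "(f x - f y) * (g x - g y) \<ge> 0"
        using fg(3) x y unfolding comonotone_def by blast
      ultimately show False by simp
    qed
    define c where "c = enn2real (m (E1 \<inter> E2))"
    define r where "r = star a b powr \<alpha>"
    have sab: "star a b \<in> {0..1}" using star_range a01 b01 by auto
    have r01: "r \<in> {0..1}" unfolding r_def using sab pw01[of "star a b" \<alpha>] pos by auto
    have c01: "c \<in> {0..1}" unfolding c_def using mu01[OF sets.Int[OF E1s E2s]] by auto
    have sub: "E1 \<inter> E2 \<subseteq> {x\<in>space M. r \<le> star (f x) (g x) powr \<alpha>}"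
    proof
      fix x assume "x \<in> E1 \<inter> E2"
      then have x: "x \<in> space M" "a \<le> f x" "b \<le> g x" unfolding E1' E2' by auto
      have "star a b \<le> star (f x) (g x)"
        using star_mono[rule_format, of a "f x" b "g x"] a01 b01 f01 x(1) g01 x by auto
      then have "r \<le> star (f x) (g x) powr \<alpha>"
        unfolding r_def using sab pos by (intro powr_mono2) auto
      then show "x \<in> {x\<in>space M. r \<le> star (f x) (g x) powr \<alpha>}" using x by auto
    qed
    have "m (E1 \<inter> E2) \<le> m {x\<in>space M. r \<le> star (f x) (g x) powr \<alpha>}"
      by (rule mono_m[OF sets.Int[OF E1s E2s] lev[OF hm] sub])
    moreover have "m {x\<in>space M. r \<le> star (f x) (g x) powr \<alpha>} < top"
    proof -
      have "m {x\<in>space M. r \<le> star (f x) (g x) powr \<alpha>} \<le> 1"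
        using mono_m[OF lev[OF hm] sets.top] mX by auto
      then show ?thesis using order.strict_trans1[OF _ ennreal_one_less_top] by blast
    qed
    ultimately have cle: "c \<le> enn2real (m {x\<in>space M. r \<le> star (f x) (g x) powr \<alpha>})"
      unfolding c_def by (rule enn2real_mono)
    have mh01: "enn2real (m {x\<in>space M. r \<le> star (f x) (g x) powr \<alpha>}) \<in> {0..1}"
      using mu01[OF lev[OF hm]] by auto
    have "S r c \<le> S r (enn2real (m {x\<in>space M. r \<le> star (f x) (g x) powr \<alpha>}))"
      using Smono[rule_format, of r r c] r01 c01 mh01 cle by auto
    also have "\<dots> \<le> seminormed_integral S M m (\<lambda>x. star (f x) (g x) powr \<alpha>)"
      by (rule Ige[OF r01])
    finally have Src: "S r c \<le> seminormed_integral S M m (\<lambda>x. star (f x) (g x) powr \<alpha>)" .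
    have Src01: "S r c \<in> {0..1}" using Srange r01 c01 by auto
    have "(S r c) powr lam \<le> L"
      unfolding L_def using Src Src01 pos by (intro powr_mono2) auto
    moreover have "(S r c) powr lam \<ge> max (star ((S s c) powr \<upsilon>) b) (star a ((S t c) powr \<tau>))"
      using cond[rule_format, of a b c] a01 b01 c01 unfolding r_def as bt by auto
    ultimately have key1: "star ((S s c) powr \<upsilon>) b \<le> L" and key2: "star a ((S t c) powr \<tau>) \<le> L"
      by auto
    define c1 where "c1 = enn2real (m E1)"
    define c2 where "c2 = enn2real (m E2)"
    have c101: "c1 \<in> {0..1}" unfolding c1_def using mu01[OF E1s] by auto
    have c201: "c2 \<in> {0..1}" unfolding c2_def using mu01[OF E2s] by auto
    have u01: "\<And>(x::real) e. x \<in> {0..1} \<Longrightarrow> e > 0 \<Longrightarrow> x powr e \<in> {0..1}"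
      using pw01 by (metis atLeastAtMost_iff)
    have "star ((S s c1) powr \<upsilon>) ((S t c2) powr \<tau>) \<le> L"
    proof (cases "E1 \<subseteq> E2")
      case True
      then have cc: "c = c1" unfolding c_def c1_def by (simp add: Int_absorb2)
      have St: "S t c2 \<in> {0..1}" "S t c2 \<le> t" using Srange Smin t c201 by auto
      have "(S t c2) powr \<tau> \<le> t powr \<tau>" using St pos by (intro powr_mono2) auto
      also have "\<dots> = b powr (\<gamma> * \<tau>)" using bt by (simp add: powr_powr[symmetric])
      also have "\<dots> \<le> b" using pw_le_self[of b "\<gamma> * \<tau>"] a01 b01 gt by auto
      finally have "(S t c2) powr \<tau> \<le> b" .
      then have "star ((S s c1) powr \<upsilon>) ((S t c2) powr \<tau>) \<le> star ((S s c1) powr \<upsilon>) b"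
        using star_mono[rule_format, of "(S s c1) powr \<upsilon>" "(S s c1) powr \<upsilon>" "(S t c2) powr \<tau>" b] u01[of "S s c1" \<upsilon>] u01[of "S t c2" \<tau>] Srange[rule_format, of s c1] s c101 St b01 pos by auto
      then show ?thesis using key1 cc by simp
    next
      case False
      then have "E2 \<subseteq> E1" using nest by auto
      then have cc: "c = c2" unfolding c_def c2_def by (simp add: Int_absorb1)
      have Ss: "S s c1 \<in> {0..1}" "S s c1 \<le> s" using Srange Smin s c101 by auto
      have "(S s c1) powr \<upsilon> \<le> s powr \<upsilon>" using Ss pos by (intro powr_mono2) auto
      also have "\<dots> = a powr (\<beta> * \<upsilon>)" using as by (simp add: powr_powr[symmetric])
      also have "\<dots> \<le> a" using pw_le_self[of a "\<beta> * \<upsilon>"] a01 bu by auto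
      finally have "(S s c1) powr \<upsilon> \<le> a" .
      then have "star ((S s c1) powr \<upsilon>) ((S t c2) powr \<tau>) \<le> star a ((S t c2) powr \<tau>)"
        using star_mono[rule_format, of "(S s c1) powr \<upsilon>" a "(S t c2) powr \<tau>" "(S t c2) powr \<tau>"] u01[of "S s c1" \<upsilon>] u01[of "S t c2" \<tau>] Srange[rule_format, of t c2] t c201 Ss a01 pos by auto
      then show ?thesis using key2 cc by simp
    qed
    then show "star ((S s (enn2real (m {x\<in>space M. s \<le> f x powr \<beta>}))) powr \<upsilon>)
           ((S t (enn2real (m {x\<in>space M. t \<le> g x powr \<gamma>}))) powr \<tau>) \<le> L"
      unfolding E1_def c1_def E2_def c2_def .
  qed
  define H where "H p = star (fst p powr \<upsilon>) (snd p powr \<tau>)" for p :: "real \<times> real"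
  have cH: "continuous_on ({0..1}\<times>{0..1}) H"
  proof -
    have "continuous_on ({0..1}\<times>{0..1::real}) (\<lambda>p::real\<times>real. (fst p powr \<upsilon>, snd p powr \<tau>))"
      using pos by (intro continuous_intros continuous_on_powr') auto
    moreover have "(\<lambda>p::real\<times>real. (fst p powr \<upsilon>, snd p powr \<tau>)) ` ({0..1}\<times>{0..1}) \<subseteq> {0..1} \<times> {0..1}"
      using pw01 pos by fastforce
    ultimately have "continuous_on ({0..1}\<times>{0..1}) (\<lambda>p::real\<times>real. (\<lambda>(a, b). star a b) (fst p powr \<upsilon>, snd p powr \<tau>))"
      by (rule continuous_on_compose2[OF star_cont])
    then show ?thesis unfolding H_def by simp
  qed
  have "H (SUP s\<in>{0..1}. S s (enn2real (m {x\<in>space M. s \<le> f x powr \<beta>})),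
           SUP t\<in>{0..1}. S t (enn2real (m {x\<in>space M. t \<le> g x powr \<gamma>}))) \<le> L"
    by (rule cont_sup[OF cH]) (use Srange mu01[OF lev[OF fbm]] mu01[OF lev[OF gbm]] P in \<open>auto simp: H_def\<close>)
  then show "star (seminormed_integral S M m (\<lambda>x. f x powr \<beta>) powr \<upsilon>)
          (seminormed_integral S M m (\<lambda>x. g x powr \<gamma>) powr \<tau>)
      \<le> seminormed_integral S M m (\<lambda>x. star (f x) (g x) powr \<alpha>) powr lam"
    unfolding H_def L_def seminormed_integral_def by simp
qed

end
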